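(* For every formula $\phi$ of the language of $\mathbf{GLP}$, $\mathbf{GLP}\vdash[1]\phi$ if and only if $\mathbf{GLP}\{[0]q\to q\}\vdash\phi$.
   Context: $\mathbf{GLP}$ is the propositional polymodal logic with modalities $[0],[1],[2],\dots$ ($\langle k\rangle:=\neg[k]\neg$) axiomatized by classical tautologies; $[k](\phi\to\psi)\to([k]\phi\to[k]\psi)$; $[k]([k]\phi\to\phi)\to[k]\phi$; $\langle j\rangle\phi\to[k]\langle j\rangle\phi$ for $j<k$; $[j]\phi\to[k]\phi$ for $j\leq k$; rules modus ponens and necessitation. $\mathbf{GLP}\{[0]q\to q\}$ (with $q$ a propositional variable) is the smallest set of formulas containing all theorems of $\mathbf{GLP}$ and the formula $[0]q\to q$ and closed under modus ponens and substitution (replacing variables uniformly by formulas); necessitation is not a rule of this set. *)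

theory Defs
  imports Main
begin

datatype fm = Var nat | Bot | Imp fm fm | Box nat fm

definition Neg :: "fm \<Rightarrow> fm" where "Neg p = Imp p Bot"
definition Dia :: "nat \<Rightarrow> fm \<Rightarrow> fm" where "Dia k p = Neg (Box k (Neg p))"

fun tval :: "(fm \<Rightarrow> bool) \<Rightarrow> fm \<Rightarrow> bool" where
  "tval V (Var n) = V (Var n)"
| "tval V Bot = False"
| "tval V (Imp p q) = (tval V p \<longrightarrow> tval V q)"
| "tval V (Box k p) = V (Box k p)"

definition Taut :: "fm \<Rightarrow> bool" where "Taut p = (\<forall>V. tval V p)"

inductive GLP :: "fm \<Rightarrow> bool" where
  taut: "Taut p \<Longrightarrow> GLP p"
| K: "GLP (Imp (Box k (Imp p q)) (Imp (Box k p) (Box k q)))"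
| Loeb: "GLP (Imp (Box k (Imp (Box k p) p)) (Box k p))"
| ax3: "j < k \<Longrightarrow> GLP (Imp (Dia j p) (Box k (Dia j p)))"
| mono: "j \<le> k \<Longrightarrow> GLP (Imp (Box j p) (Box k p))"
| mp: "GLP (Imp p q) \<Longrightarrow> GLP p \<Longrightarrow> GLP q"
| nec: "GLP p \<Longrightarrow> GLP (Box k p)"

fun subst :: "(nat \<Rightarrow> fm) \<Rightarrow> fm \<Rightarrow> fm" where
  "subst s (Var n) = s n"
| "subst s Bot = Bot"
| "subst s (Imp p q) = Imp (subst s p) (subst s q)"
| "subst s (Box k p) = Box k (subst s p)"

(* GLP{[0]q -> q}, with q the propositional variable Var 0 *)
inductive GLPq :: "fm \<Rightarrow> bool" where
  glp: "GLP p \<Longrightarrow> GLPq p"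
| refl0: "GLPq (Imp (Box 0 (Var 0)) (Var 0))"
| mp: "GLPq (Imp p q) \<Longrightarrow> GLPq p \<Longrightarrow> GLPq q"
| sub: "GLPq p \<Longrightarrow> GLPq (subst s p)"

end

theory Submission
  imports Defs
begin

lemma tval_subst: "tval V (subst s p) = tval (\<lambda>q. tval V (subst s q)) p"
proof (induction p)
  case (Imp a b) then show ?case by (simp only: subst.simps(3) tval.simps(3))
qed (simp_all only: tval.simps subst.simps(2))

lemma Taut_subst: "Taut p \<Longrightarrow> Taut (subst s p)"
  unfolding Taut_def by (intro allI, subst tval_subst) blast

lemma subst_Dia: "subst s (Dia k p) = Dia k (subst s p)"
  by (simp add: Dia_def Neg_def)

lemma GLP_subst: "GLP p \<Longrightarrow> GLP (subst s p)"
proof (induction rule: GLP.induct)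
  case (ax3 j k p) then show ?case by (simp add: subst_Dia GLP.ax3)
qed (auto intro: GLP.intros Taut_subst)

lemma taut_mp: "Taut (Imp a b) \<Longrightarrow> GLP a \<Longrightarrow> GLP b"
  by (meson GLP.mp GLP.taut)

lemma taut_mp2: "Taut (Imp a (Imp b c)) \<Longrightarrow> GLP a \<Longrightarrow> GLP b \<Longrightarrow> GLP c"
  by (meson GLP.mp GLP.taut)

lemma boxI: "GLP (Imp a b) \<Longrightarrow> GLP (Imp (Box k a) (Box k b))"
  by (meson GLP.K GLP.mp GLP.nec)

lemma box_mp: "GLP (Box k (Imp a b)) \<Longrightarrow> GLP (Box k a) \<Longrightarrow> GLP (Box k b)"
  by (meson GLP.K GLP.mp)

lemma trans_imp: "GLP (Imp a b) \<Longrightarrow> GLP (Imp b c) \<Longrightarrow> GLP (Imp a c)"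
  by (rule taut_mp2[of "Imp a b" "Imp b c"]) (auto simp: Taut_def)

lemma refl1: "GLP (Box 1 (Imp (Box 0 p) p))"
proof -
  have a: "GLP (Imp (Box 0 p) (Box 1 (Imp (Box 0 p) p)))"
  proof (rule trans_imp)
    show "GLP (Imp (Box 0 p) (Box 1 p))" by (rule GLP.mono) simp
    show "GLP (Imp (Box 1 p) (Box 1 (Imp (Box 0 p) p)))"
      by (rule boxI, rule GLP.taut) (simp add: Taut_def)
  qed
  have nn: "GLP (Imp (Box 0 p) (Box 0 (Neg (Neg p))))"
    by (rule boxI, rule GLP.taut) (simp add: Taut_def Neg_def)
  have d: "GLP (Imp (Dia 0 (Neg p)) (Imp (Box 0 p) p))"
    by (rule taut_mp[OF _ nn]) (auto simp add: Taut_def Neg_def Dia_def)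
  have b: "GLP (Imp (Dia 0 (Neg p)) (Box 1 (Imp (Box 0 p) p)))"
  proof (rule trans_imp)
    show "GLP (Imp (Dia 0 (Neg p)) (Box 1 (Dia 0 (Neg p))))" by (rule GLP.ax3) simp
    show "GLP (Imp (Box 1 (Dia 0 (Neg p))) (Box 1 (Imp (Box 0 p) p)))"
      by (rule boxI[OF d])
  qed
  have nn2: "GLP (Imp (Box 0 (Neg (Neg p))) (Box 0 p))"
    by (rule boxI, rule GLP.taut) (simp add: Taut_def Neg_def)
  have c: "GLP (Imp (Neg (Box 0 p)) (Box 1 (Imp (Box 0 p) p)))"
    by (rule trans_imp[OF _ b], rule taut_mp[OF _ nn2]) (auto simp add: Taut_def Neg_def Dia_def)
  show ?thesis
    by (rule taut_mp2[OF _ a c]) (auto simp add: Taut_def Neg_def)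
qed

lemma easy: "GLPq p \<Longrightarrow> GLP (Box 1 p)"
proof (induction rule: GLPq.induct)
  case (glp p) then show ?case by (rule GLP.nec)
next
  case refl0 then show ?case by (rule refl1)
next
  case (mp p q) then show ?case using box_mp by blast
next
  case (sub p s) then show ?case using GLP_subst[of "Box 1 p" s] by simp
qed

definition And :: "fm \<Rightarrow> fm \<Rightarrow> fm" where "And a b = Imp (Imp a (Imp b Bot)) Bot"
definition Top :: fm where "Top = Imp Bot Bot"

fun tr :: "fm \<Rightarrow> fm" where
  "tr (Var n) = Var n"
| "tr Bot = Bot"
| "tr (Imp a b) = Imp (tr a) (tr b)"
| "tr (Box k p) = (if k = 0 then Box 0 p else if k = 1 then And p (Box 1 p) else Top)"

lemma tval_tr: "tval V (tr p) = tval (\<lambda>q. tval V (tr q)) p"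
proof (induction p)
  case (Imp a b) then show ?case by (simp only: tr.simps(3) tval.simps(3))
qed (simp_all only: tval.simps tr.simps(2))

lemma Taut_tr: "Taut p \<Longrightarrow> Taut (tr p)"
  unfolding Taut_def by (intro allI, subst tval_tr) blast

lemma q_taut: "Taut a \<Longrightarrow> GLPq a"
  by (rule GLPq.glp, rule GLP.taut)

lemma q_mp1: "Taut (Imp a b) \<Longrightarrow> GLPq a \<Longrightarrow> GLPq b"
  by (meson GLPq.mp q_taut)

lemma q_mp2: "Taut (Imp a (Imp b c)) \<Longrightarrow> GLPq a \<Longrightarrow> GLPq b \<Longrightarrow> GLPq c"
  by (meson GLPq.mp q_taut)

lemma q_refl: "GLPq (Imp (Box 0 p) p)"
  using GLPq.sub[OF GLPq.refl0, of "\<lambda>_. p"] by simp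

lemma k_cases: fixes k :: nat obtains "k = 0" | "k = 1" | "k \<ge> 2"
proof -
  have "k = 0 \<or> k = 1 \<or> k \<ge> 2" by linarith
  then show ?thesis using that by blast
qed

lemma K1: "GLPq (tr (Imp (Box 1 (Imp p q)) (Imp (Box 1 p) (Box 1 q))))"
  by (rule q_mp1[OF _ GLPq.glp[OF GLP.K[of 1 p q]]]) (auto simp: Taut_def And_def)

lemma Loeb1: "GLPq (tr (Imp (Box 1 (Imp (Box 1 p) p)) (Box 1 p)))"
  by (rule q_mp1[OF _ GLPq.glp[OF GLP.Loeb[of 1 p]]]) (auto simp: Taut_def And_def)

lemma ax301: "GLPq (tr (Imp (Dia 0 p) (Box 1 (Dia 0 p))))"
  by (rule q_mp1[OF _ GLPq.glp[OF GLP.ax3[of 0 1 p]]]) (auto simp: Taut_def And_def Dia_def Neg_def)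

lemma mono01: "GLPq (tr (Imp (Box 0 p) (Box 1 p)))"
  by (rule q_mp2[OF _ GLPq.glp[OF GLP.mono[of 0 1 p]] q_refl]) (auto simp: Taut_def And_def)

lemma nec1: "GLP p \<Longrightarrow> GLPq (tr (Box 1 p))"
  by (rule q_mp2[OF _ GLPq.glp GLPq.glp[OF GLP.nec[of p 1]]]) (auto simp: Taut_def And_def)

lemma big: "k \<ge> 2 \<Longrightarrow> GLPq (Imp a (tr (Box k p)))"
  by (intro q_taut) (simp add: Taut_def Top_def)

lemma hard: "GLP p \<Longrightarrow> GLPq (tr p)"
proof (induction rule: GLP.induct)
  case (taut p) then show ?case by (rule q_taut[OF Taut_tr])
next
  case (K k p q)
  show ?case
  proof (cases k rule: k_cases)
    case 1 then show ?thesis by (simp add: GLPq.glp GLP.K)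
  next
    case 2 then show ?thesis using K1 by simp
  next
    case 3 then show ?thesis by (intro q_taut) (simp add: Taut_def Top_def)
  qed
next
  case (Loeb k p)
  show ?case
  proof (cases k rule: k_cases)
    case 1 then show ?thesis by (simp add: GLPq.glp GLP.Loeb)
  next
    case 2 then show ?thesis using Loeb1 by simp
  next
    case 3 then show ?thesis using big[of k] by simp
  qed
next
  case (ax3 j k p)
  show ?case
  proof (cases k rule: k_cases)
    case 1 then show ?thesis using ax3 by simp
  next
    case 2 then have "j = 0" using ax3 by simp
    then show ?thesis using 2 ax301 by simp
  next
    case 3 then show ?thesis using big[of k] by simp
  qed
next
  case (mono j k p)
  show ?case
  proof (cases k rule: k_cases)
    case 1 then have "j = 0" using mono by simp
    then show ?thesis using 1 by (intro q_taut) (simp add: Taut_def)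
  next
    case 2
    show ?thesis
    proof (cases "j = 0")
      case True
      then show ?thesis using 2 mono01 by simp
    next
      case False then have "j = 1" using 2 mono by simp
      then show ?thesis using 2 by (intro q_taut) (simp add: Taut_def)
    qed
  next
    case 3 then show ?thesis using big[of k] by simp
  qed
next
  case (mp p q) then show ?case using GLPq.mp[of "tr p" "tr q"] by simp
next
  case (nec p k)
  show ?case
  proof (cases k rule: k_cases)
    case 1 then show ?thesis using nec by (simp add: GLPq.glp GLP.nec)
  next
    case 2 then show ?thesis using nec1[OF nec.hyps] by simp
  next
    case 3 then show ?thesis by (simp add: q_taut Taut_def Top_def)
  qed
qed

theorem mainTheorem10:
  shows "\<forall>\<phi>. GLP (Box 1 \<phi>) \<longleftrightarrow> GLPq \<phi>"
proof
  fix \<phi>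
  show "GLP (Box 1 \<phi>) \<longleftrightarrow> GLPq \<phi>"
  proof
    assume "GLP (Box 1 \<phi>)"
    then have "GLPq (tr (Box 1 \<phi>))" by (rule hard)
    then have "GLPq (And \<phi> (Box 1 \<phi>))" by simp
    then show "GLPq \<phi>" by (rule q_mp1[rotated]) (auto simp: Taut_def And_def)
  next
    assume "GLPq \<phi>" then show "GLP (Box 1 \<phi>)" by (rule easy)
  qed
qed

end
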